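(* Let $X_1,\dots,X_r$ be Banach spaces and let $\|\cdot\|_\psi$ be an absolute normalized norm on $\mathbb{R}^r$. Let $T:K\to K$ be a nonexpansive mapping on a weakly compact convex subset $K$ of $(X_1\oplus\dots\oplus X_r)_\psi$ which is minimal invariant for $T$, with $\operatorname{diam}K=1$, and let $(w_n)=((x_n^{(1)},\dots,x_n^{(r)}))$ be an approximate fixed point sequence for $T$ in $K$ converging weakly to $(0,\dots,0)\in K$ with $\lim_{n\to\infty}\|x_n^{(r)}\|=0$. Let $\varepsilon_1\in(0,1)$, let $k\ge 1$ be an integer, and let $w_{n_1}=(x_{n_1}^{(1)},\dots,x_{n_1}^{(r)})$ be a term of the sequence with $\|Tw_{n_1}-w_{n_1}\|_\psi<\varepsilon_1$ and $\|x_{n_1}^{(r)}\|<\varepsilon_1$. Define $D_1^1=\{w_{n_1}\}$ and $D_{j+1}^1=\operatorname{conv}(D_j^1\cup T(D_j^1))$ for $j=1,\dots,k-1$. Then for every $u=(y^{(1)},\dots,y^{(r)})\in D_k^1$ we have $\|y^{(r)}\|<k\varepsilon_1$.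
   Context: A norm $\|\cdot\|$ on $\mathbb{R}^r$ is absolute if $\|(x_1,\dots,x_r)\|=\|(|x_1|,\dots,|x_r|)\|$ for all $x$, and normalized if $\|e_1\|=\dots=\|e_r\|=1$ for the standard unit vectors. For Banach spaces $X_1,\dots,X_r$, the direct sum $(X_1\oplus\dots\oplus X_r)_\psi$ is $X_1\times\dots\times X_r$ with the norm $\|(x_1,\dots,x_r)\|_\psi=\|(\|x_1\|,\dots,\|x_r\|)\|_\psi$. A mapping $T$ is nonexpansive if $\|Tx-Ty\|\le\|x-y\|$. $K$ is minimal invariant for $T$ if $T(K)\subset K$ and no proper nonempty weakly compact convex subset of $K$ is $T$-invariant. A sequence $(w_n)$ in $K$ is an approximate fixed point sequence if $\|Tw_n-w_n\|\to 0$. $\operatorname{conv}$ denotes the convex hull. *)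

theory Defs
  imports "HOL-Analysis.Analysis"
begin

text \<open>Vectors of R^r are modelled as functions nat => real supported on {1..r}.\<close>

definition Rvec :: "nat \<Rightarrow> (nat \<Rightarrow> real) set" where
  "Rvec r = {a. \<forall>i. i \<notin> {1..r} \<longrightarrow> a i = 0}"

definition is_norm_Rr :: "nat \<Rightarrow> ((nat \<Rightarrow> real) \<Rightarrow> real) \<Rightarrow> bool" where
  "is_norm_Rr r psi \<longleftrightarrow>
     (\<forall>a\<in>Rvec r. psi a \<ge> 0 \<and> (psi a = 0 \<longleftrightarrow> a = (\<lambda>i. 0))) \<and>
     (\<forall>a\<in>Rvec r. \<forall>c. psi (\<lambda>i. c * a i) = \<bar>c\<bar> * psi a) \<and>
     (\<forall>a\<in>Rvec r. \<forall>b\<in>Rvec r. psi (\<lambda>i. a i + b i) \<le> psi a + psi b)"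

definition absolute_normalized_norm :: "nat \<Rightarrow> ((nat \<Rightarrow> real) \<Rightarrow> real) \<Rightarrow> bool" where
  "absolute_normalized_norm r psi \<longleftrightarrow>
     is_norm_Rr r psi \<and>
     (\<forall>a\<in>Rvec r. psi a = psi (\<lambda>i. \<bar>a i\<bar>)) \<and>
     (\<forall>j\<in>{1..r}. psi (\<lambda>i. if i = j then 1 else 0) = 1)"

text \<open>The Banach spaces X_1..X_r are closed linear subspaces X i of a common Banach space 'a
  (every finite family of Banach spaces embeds isometrically in a common one).\<close>

definition psum_space :: "nat \<Rightarrow> (nat \<Rightarrow> 'a::real_normed_vector set) \<Rightarrow> (nat \<Rightarrow> 'a) set" where
  "psum_space r X = {w. (\<forall>i\<in>{1..r}. w i \<in> X i) \<and> (\<forall>i. i \<notin> {1..r} \<longrightarrow> w i = 0)}"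

definition psum_norm :: "((nat \<Rightarrow> real) \<Rightarrow> real) \<Rightarrow> (nat \<Rightarrow> 'a::real_normed_vector) \<Rightarrow> real" where
  "psum_norm psi w = psi (\<lambda>i. norm (w i))"

definition psum_dist :: "((nat \<Rightarrow> real) \<Rightarrow> real) \<Rightarrow> (nat \<Rightarrow> 'a::real_normed_vector) \<Rightarrow> (nat \<Rightarrow> 'a) \<Rightarrow> real" where
  "psum_dist psi v w = psum_norm psi (\<lambda>i. v i - w i)"

definition psum_dual :: "nat \<Rightarrow> (nat \<Rightarrow> 'a::real_normed_vector set) \<Rightarrow> ((nat \<Rightarrow> real) \<Rightarrow> real)
      \<Rightarrow> ((nat \<Rightarrow> 'a) \<Rightarrow> real) set" where
  "psum_dual r X psi = {f.
     (\<forall>v\<in>psum_space r X. \<forall>w\<in>psum_space r X. \<forall>a b.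
         f (\<lambda>i. a *\<^sub>R v i + b *\<^sub>R w i) = a * f v + b * f w) \<and>
     (\<exists>C. \<forall>w\<in>psum_space r X. \<bar>f w\<bar> \<le> C * psum_norm psi w)}"

definition psum_weak_topology :: "nat \<Rightarrow> (nat \<Rightarrow> 'a::real_normed_vector set) \<Rightarrow> ((nat \<Rightarrow> real) \<Rightarrow> real)
      \<Rightarrow> (nat \<Rightarrow> 'a) topology" where
  "psum_weak_topology r X psi = topology_generated_by
     {{w\<in>psum_space r X. f w \<in> U} | f U. f \<in> psum_dual r X psi \<and> open U}"

definition psum_convex :: "(nat \<Rightarrow> 'a::real_vector) set \<Rightarrow> bool" where
  "psum_convex C \<longleftrightarrow> (\<forall>x\<in>C. \<forall>y\<in>C. \<forall>t::real. 0 \<le> t \<and> t \<le> 1 \<longrightarrow>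
       (\<lambda>i. (1 - t) *\<^sub>R x i + t *\<^sub>R y i) \<in> C)"

definition psum_conv :: "(nat \<Rightarrow> 'a::real_vector) set \<Rightarrow> (nat \<Rightarrow> 'a) set" where
  "psum_conv A = \<Inter>{C. A \<subseteq> C \<and> psum_convex C}"

definition psum_diam :: "((nat \<Rightarrow> real) \<Rightarrow> real) \<Rightarrow> (nat \<Rightarrow> 'a::real_normed_vector) set \<Rightarrow> real" where
  "psum_diam psi K = Sup {psum_dist psi x y | x y. x \<in> K \<and> y \<in> K}"

definition psum_nonexpansive :: "((nat \<Rightarrow> real) \<Rightarrow> real) \<Rightarrow> (nat \<Rightarrow> 'a::real_normed_vector) set
      \<Rightarrow> ((nat \<Rightarrow> 'a) \<Rightarrow> (nat \<Rightarrow> 'a)) \<Rightarrow> bool" where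
  "psum_nonexpansive psi K T \<longleftrightarrow>
     (\<forall>x\<in>K. \<forall>y\<in>K. psum_dist psi (T x) (T y) \<le> psum_dist psi x y)"

definition psum_weakly_compact :: "nat \<Rightarrow> (nat \<Rightarrow> 'a::real_normed_vector set) \<Rightarrow> ((nat \<Rightarrow> real) \<Rightarrow> real)
      \<Rightarrow> (nat \<Rightarrow> 'a) set \<Rightarrow> bool" where
  "psum_weakly_compact r X psi K \<longleftrightarrow> compactin (psum_weak_topology r X psi) K"

definition minimal_invariant :: "nat \<Rightarrow> (nat \<Rightarrow> 'a::real_normed_vector set) \<Rightarrow> ((nat \<Rightarrow> real) \<Rightarrow> real)
      \<Rightarrow> ((nat \<Rightarrow> 'a) \<Rightarrow> (nat \<Rightarrow> 'a)) \<Rightarrow> (nat \<Rightarrow> 'a) set \<Rightarrow> bool" where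
  "minimal_invariant r X psi T K \<longleftrightarrow> T ` K \<subseteq> K \<and>
     (\<forall>K'. K' \<subseteq> K \<and> K' \<noteq> {} \<and> psum_weakly_compact r X psi K' \<and> psum_convex K' \<and> T ` K' \<subseteq> K'
        \<longrightarrow> K' = K)"

end

theory Submission imports Defs begin

lemma Rvec_I: "(\<And>i. i \<notin> {1..r} \<Longrightarrow> a i = 0) \<Longrightarrow> a \<in> Rvec r"
  by (auto simp: Rvec_def)

lemma mono_coord:
  assumes psi: "absolute_normalized_norm r psi" and x: "x \<in> Rvec r"
    and nn: "\<forall>i. 0 \<le> x i" and s: "0 \<le> s" "s \<le> x j"
  shows "psi (x(j:=s)) \<le> psi x"
proof (cases "x j = 0")
  case True
  then have "s = 0" using s by simp
  then have "x(j:=s) = x" using True by auto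
  then show ?thesis by simp
next
  case False
  then have xj: "x j > 0" using nn by (metis less_eq_real_def)
  have j: "j \<in> {1..r}" using False x by (auto simp: Rvec_def)
  define x' where "x' = x(j := - x j)"
  have x'R: "x' \<in> Rvec r" using x j by (auto simp: Rvec_def x'_def)
  have abs: "(\<lambda>i. \<bar>x' i\<bar>) = x" using nn by (auto simp: x'_def)
  have px': "psi x' = psi x"
    using psi x'R abs unfolding absolute_normalized_norm_def by metis
  define t where "t = (x j + s) / (2 * x j)"
  have t0: "0 \<le> t" using xj s by (simp add: t_def)
  have t1: "t \<le> 1" using xj s by (simp add: t_def field_simps)
  have eq: "x(j:=s) = (\<lambda>i. (\<lambda>i. t * x i) i + (\<lambda>i. (1 - t) * x' i) i)"
  proof
    fix i show "(x(j:=s)) i = t * x i + (1 - t) * x' i"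
    proof (cases "i = j")
      case True
      have "t * x j - (1 - t) * x j = s" using xj by (simp add: t_def field_simps)
      then show ?thesis using True by (simp add: x'_def)
    next
      case False then show ?thesis by (simp add: x'_def algebra_simps)
    qed
  qed
  have R1: "(\<lambda>i. t * x i) \<in> Rvec r" using x by (auto simp: Rvec_def)
  have R2: "(\<lambda>i. (1 - t) * x' i) \<in> Rvec r" using x'R by (auto simp: Rvec_def)
  have n: "is_norm_Rr r psi" using psi by (simp add: absolute_normalized_norm_def)
  have "psi (x(j:=s)) \<le> psi (\<lambda>i. t * x i) + psi (\<lambda>i. (1 - t) * x' i)"
  proof -
    have tri: "\<And>a b. a\<in>Rvec r \<Longrightarrow> b\<in>Rvec r \<Longrightarrow> psi (\<lambda>i. a i + b i) \<le> psi a + psi b"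
      using n unfolding is_norm_Rr_def by blast
    show ?thesis using tri[OF R1 R2] eq by simp
  qed
  also have "\<dots> = t * psi x + (1 - t) * psi x'"
    using n x x'R t0 t1 unfolding is_norm_Rr_def by simp
  also have "\<dots> = psi x" using px' by (simp add: algebra_simps)
  finally show ?thesis .
qed

lemma psi_mono:
  assumes psi: "absolute_normalized_norm r psi" and a: "a \<in> Rvec r" and b: "b \<in> Rvec r"
    and le: "\<forall>i. 0 \<le> a i \<and> a i \<le> b i"
  shows "psi a \<le> psi b"
proof -
  define c where "c m = (\<lambda>i. if i < m then a i else b i)" for m
  have cR: "c m \<in> Rvec r" for m using a b by (auto simp: Rvec_def c_def)
  have "psi (c m) \<le> psi b" for m
  proof (induction m)
    case 0 then show ?case by (simp add: c_def)
  next
    case (Suc m)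
    have "c (Suc m) = (c m)(m := a m)" by (auto simp: c_def)
    moreover have "psi ((c m)(m := a m)) \<le> psi (c m)"
      apply (rule mono_coord[OF psi cR])
      using le by (auto simp: c_def intro: order_trans)
    ultimately show ?case using Suc by (metis order_trans)
  qed
  moreover have "c (Suc r) = a" using a b by (auto simp: c_def Rvec_def)
  ultimately show ?thesis by metis
qed

lemma psi_coord:
  assumes psi: "absolute_normalized_norm r psi" and a: "a \<in> Rvec r" and j: "j \<in> {1..r}"
  shows "\<bar>a j\<bar> \<le> psi a"
proof -
  have n: "is_norm_Rr r psi" using psi by (simp add: absolute_normalized_norm_def)
  define e where "e = (\<lambda>i. if i = j then 1 else (0::real))"
  have eR: "e \<in> Rvec r" using j by (auto simp: Rvec_def e_def)
  have aR: "(\<lambda>i. \<bar>a i\<bar>) \<in> Rvec r" using a by (auto simp: Rvec_def)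
  have "psi (\<lambda>i. \<bar>a j\<bar> * e i) = \<bar>a j\<bar> * psi e" using n eR unfolding is_norm_Rr_def by simp
  also have "psi e = 1" using psi j unfolding absolute_normalized_norm_def e_def by blast
  finally have 1: "psi (\<lambda>i. \<bar>a j\<bar> * e i) = \<bar>a j\<bar>" by simp
  have "psi (\<lambda>i. \<bar>a j\<bar> * e i) \<le> psi (\<lambda>i. \<bar>a i\<bar>)"
    apply (rule psi_mono[OF psi _ aR])
    using eR by (auto simp: Rvec_def e_def)
  also have "\<dots> = psi a" using psi a unfolding absolute_normalized_norm_def by metis
  finally show ?thesis using 1 by simp
qed


lemma N_R: "u \<in> psum_space r X \<Longrightarrow> v \<in> psum_space r X \<Longrightarrow> (\<lambda>i. norm (u i - v i)) \<in> Rvec r"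
  by (auto simp: Rvec_def psum_space_def)

lemma pd_nonneg:
  assumes psi: "absolute_normalized_norm r psi" "u \<in> psum_space r X" "v \<in> psum_space r X"
  shows "0 \<le> psum_dist psi u v"
proof -
  have n: "\<forall>a\<in>Rvec r. psi a \<ge> 0" using psi(1) unfolding absolute_normalized_norm_def is_norm_Rr_def by blast
  show ?thesis using n N_R[OF assms(2,3)] unfolding psum_dist_def psum_norm_def by blast
qed

lemma pd_self:
  assumes psi: "absolute_normalized_norm r psi"
  shows "psum_dist psi u u = 0"
proof -
  have "(\<lambda>i. 0::real) \<in> Rvec r" by (simp add: Rvec_def)
  moreover have "\<forall>a\<in>Rvec r. (psi a = 0 \<longleftrightarrow> a = (\<lambda>i. 0))"
    using psi unfolding absolute_normalized_norm_def is_norm_Rr_def by blast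
  ultimately show ?thesis unfolding psum_dist_def psum_norm_def by simp
qed

lemma pd_tri:
  assumes psi: "absolute_normalized_norm r psi" and u: "u \<in> psum_space r X"
    and v: "v \<in> psum_space r X" and z: "z \<in> psum_space r X"
  shows "psum_dist psi u z \<le> psum_dist psi u v + psum_dist psi v z"
proof -
  have n: "is_norm_Rr r psi" using psi by (simp add: absolute_normalized_norm_def)
  have tri: "\<And>a b. a\<in>Rvec r \<Longrightarrow> b\<in>Rvec r \<Longrightarrow> psi (\<lambda>i. a i + b i) \<le> psi a + psi b"
    using n unfolding is_norm_Rr_def by blast
  have S: "(\<lambda>i. norm (u i - v i) + norm (v i - z i)) \<in> Rvec r"
    using u v z by (auto simp: Rvec_def psum_space_def)
  have "psi (\<lambda>i. norm (u i - z i)) \<le> psi (\<lambda>i. norm (u i - v i) + norm (v i - z i))"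
    apply (rule psi_mono[OF psi N_R[OF u z] S])
    by (auto intro: norm_diff_triangle_le)
  also have "\<dots> \<le> psi (\<lambda>i. norm (u i - v i)) + psi (\<lambda>i. norm (v i - z i))"
    using tri[OF N_R[OF u v] N_R[OF v z]] by simp
  finally show ?thesis by (simp add: psum_dist_def psum_norm_def)
qed

lemma pd_conv:
  assumes psi: "absolute_normalized_norm r psi" and x: "x \<in> psum_space r X"
    and y: "y \<in> psum_space r X" and c: "c \<in> psum_space r X" and t: "0 \<le> t" "t \<le> 1"
  shows "psum_dist psi (\<lambda>i. (1 - t) *\<^sub>R x i + t *\<^sub>R y i) c \<le> (1 - t) * psum_dist psi x c + t * psum_dist psi y c"
proof -
  have n: "is_norm_Rr r psi" using psi by (simp add: absolute_normalized_norm_def)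
  have tri: "\<And>a b. a\<in>Rvec r \<Longrightarrow> b\<in>Rvec r \<Longrightarrow> psi (\<lambda>i. a i + b i) \<le> psi a + psi b"
    using n unfolding is_norm_Rr_def by blast
  have sc: "\<And>a c. a\<in>Rvec r \<Longrightarrow> psi (\<lambda>i. c * a i) = \<bar>c\<bar> * psi a"
    using n unfolding is_norm_Rr_def by blast
  have A: "(\<lambda>i. norm ((1 - t) *\<^sub>R x i + t *\<^sub>R y i - c i)) \<in> Rvec r"
    using x y c by (auto simp: Rvec_def psum_space_def)
  have R1: "(\<lambda>i. (1 - t) * norm (x i - c i)) \<in> Rvec r" using x c by (auto simp: Rvec_def psum_space_def)
  have R2: "(\<lambda>i. t * norm (y i - c i)) \<in> Rvec r" using y c by (auto simp: Rvec_def psum_space_def)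
  have S: "(\<lambda>i. (1 - t) * norm (x i - c i) + t * norm (y i - c i)) \<in> Rvec r"
    using x y c by (auto simp: Rvec_def psum_space_def)
  have cw: "norm ((1 - t) *\<^sub>R x i + t *\<^sub>R y i - c i) \<le> (1 - t) * norm (x i - c i) + t * norm (y i - c i)" for i
  proof -
    have e: "(1 - t) *\<^sub>R x i + t *\<^sub>R y i - c i = (1 - t) *\<^sub>R (x i - c i) + t *\<^sub>R (y i - c i)"
      by (simp add: algebra_simps)
    have h1: "norm ((1 - t) *\<^sub>R (x i - c i)) = (1 - t) * norm (x i - c i)" using t by simp
    have h2: "norm (t *\<^sub>R (y i - c i)) = t * norm (y i - c i)" using t by simp
    have tri: "norm ((1 - t) *\<^sub>R (x i - c i) + t *\<^sub>R (y i - c i)) \<le> norm ((1 - t) *\<^sub>R (x i - c i)) + norm (t *\<^sub>R (y i - c i))"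
      by (rule norm_triangle_ineq)
    show ?thesis unfolding e using tri unfolding h1 h2 .
  qed
  have "psi (\<lambda>i. norm ((1 - t) *\<^sub>R x i + t *\<^sub>R y i - c i)) \<le> psi (\<lambda>i. (1 - t) * norm (x i - c i) + t * norm (y i - c i))"
    apply (rule psi_mono[OF psi A S]) using cw by simp
  also have "\<dots> \<le> psi (\<lambda>i. (1 - t) * norm (x i - c i)) + psi (\<lambda>i. t * norm (y i - c i))"
    using tri[OF R1 R2] by simp
  also have "\<dots> = (1 - t) * psi (\<lambda>i. norm (x i - c i)) + t * psi (\<lambda>i. norm (y i - c i))"
    using sc[OF N_R[OF x c], of "1 - t"] sc[OF N_R[OF y c], of t] t by simp
  finally show ?thesis by (simp add: psum_dist_def psum_norm_def)
qed

lemma conv_sub: "A \<subseteq> C \<Longrightarrow> psum_convex C \<Longrightarrow> psum_conv A \<subseteq> C"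
  unfolding psum_conv_def by blast

theorem lemma3p1:
  fixes r :: nat
    and X :: "nat \<Rightarrow> 'a::banach set"
    and psi :: "(nat \<Rightarrow> real) \<Rightarrow> real"
    and K :: "(nat \<Rightarrow> 'a) set"
    and T :: "(nat \<Rightarrow> 'a) \<Rightarrow> (nat \<Rightarrow> 'a)"
    and w :: "nat \<Rightarrow> (nat \<Rightarrow> 'a)"
    and \<epsilon>1 :: real and k :: nat and n1 :: nat
    and D :: "nat \<Rightarrow> (nat \<Rightarrow> 'a) set"
  assumes r: "r \<ge> 1"
    and X: "\<forall>i\<in>{1..r}. subspace (X i) \<and> closed (X i)"
    and psi: "absolute_normalized_norm r psi"
    and KS: "K \<subseteq> psum_space r X"
    and Kwc: "psum_weakly_compact r X psi K"
    and Kconv: "psum_convex K"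
    and TK: "T ` K \<subseteq> K"
    and Tne: "psum_nonexpansive psi K T"
    and Kmin: "minimal_invariant r X psi T K"
    and diam: "psum_diam psi K = 1"
    and wK: "\<forall>n. w n \<in> K"
    and afps: "(\<lambda>n. psum_dist psi (T (w n)) (w n)) \<longlonglongrightarrow> 0"
    and zero: "(\<lambda>i. 0) \<in> K"
    and weak: "limitin (psum_weak_topology r X psi) w (\<lambda>i. 0) sequentially"
    and lastc: "(\<lambda>n. norm (w n r)) \<longlonglongrightarrow> 0"
    and eps: "0 < \<epsilon>1" "\<epsilon>1 < 1"
    and k: "k \<ge> 1"
    and n1: "psum_dist psi (T (w n1)) (w n1) < \<epsilon>1" "norm (w n1 r) < \<epsilon>1"
    and D1: "D 1 = {w n1}"
    and Dstep: "\<forall>j. 1 \<le> j \<and> j \<le> k - 1 \<longrightarrow> D (j + 1) = psum_conv (D j \<union> T ` D j)"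
  shows "\<forall>u\<in>D k. norm (u r) < real k * \<epsilon>1"
proof -
  define c where "c = w n1"
  define \<delta> where "\<delta> = psum_dist psi (T c) c"
  have cK: "c \<in> K" using wK by (simp add: c_def)
  have TcK: "T c \<in> K" using TK cK by blast
  have d0: "0 \<le> \<delta>" unfolding \<delta>_def using pd_nonneg[OF psi] KS cK TcK by blast
  have dlt: "\<delta> < \<epsilon>1" using n1 by (simp add: \<delta>_def c_def)
  define C where "C j = {u \<in> K. psum_dist psi u c \<le> (real j - 1) * \<delta>}" for j :: nat
  have Cconv: "psum_convex (C j)" for j
    unfolding psum_convex_def
  proof (intro ballI allI impI)
    fix x y and t :: real assume x: "x \<in> C j" and y: "y \<in> C j" and t: "0 \<le> t \<and> t \<le> 1"
    have xK: "x \<in> K" and yK: "y \<in> K" using x y by (auto simp: C_def)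
    have inK: "(\<lambda>i. (1 - t) *\<^sub>R x i + t *\<^sub>R y i) \<in> K" using Kconv xK yK t by (simp add: psum_convex_def)
    have "psum_dist psi (\<lambda>i. (1 - t) *\<^sub>R x i + t *\<^sub>R y i) c \<le> (1 - t) * psum_dist psi x c + t * psum_dist psi y c"
    proof -
      have "x \<in> psum_space r X" "y \<in> psum_space r X" "c \<in> psum_space r X" using xK yK cK KS by auto
      then show ?thesis using pd_conv[OF psi] t by blast
    qed
    also have "\<dots> \<le> (1 - t) * ((real j - 1) * \<delta>) + t * ((real j - 1) * \<delta>)"
      apply (rule add_mono; rule mult_left_mono) using x y t by (auto simp: C_def)
    also have "\<dots> = (real j - 1) * \<delta>" by (simp add: algebra_simps)
    finally show "(\<lambda>i. (1 - t) *\<^sub>R x i + t *\<^sub>R y i) \<in> C j" unfolding C_def using inK by blast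
  qed
  have main: "1 \<le> j \<longrightarrow> j \<le> k \<longrightarrow> D j \<subseteq> C j" for j
  proof (induction j)
    case 0 then show ?case by simp
  next
    case (Suc j)
    show ?case
    proof (cases "j = 0")
      case True
      then show ?thesis using D1 cK pd_self[OF psi, of "w n1"] by (auto simp: C_def c_def)
    next
      case False
      show ?thesis
      proof (intro impI)
        assume sk: "Suc j \<le> k"
        have Dj: "D j \<subseteq> C j" and eq: "D (Suc j) = psum_conv (D j \<union> T ` D j)"
        proof -
          have j1: "1 \<le> j \<and> j \<le> k - 1" using False sk by linarith
          show "D j \<subseteq> C j" using Suc.IH j1 sk by simp
          have "D (j + 1) = psum_conv (D j \<union> T ` D j)" using Dstep j1 by blast
          then show "D (Suc j) = psum_conv (D j \<union> T ` D j)" by simp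
        qed
        have "D j \<union> T ` D j \<subseteq> C (Suc j)"
        proof
          fix u assume "u \<in> D j \<union> T ` D j"
          then show "u \<in> C (Suc j)"
          proof
            assume "u \<in> D j"
            then have "u \<in> K" "psum_dist psi u c \<le> (real j - 1) * \<delta>" using Dj by (auto simp: C_def)
            moreover have "(real j - 1) * \<delta> \<le> (real (Suc j) - 1) * \<delta>" using d0 by (simp add: mult_right_mono)
            ultimately show ?thesis by (auto simp: C_def)
          next
            assume "u \<in> T ` D j"
            then obtain v where v: "v \<in> D j" "u = T v" by blast
            have vK: "v \<in> K" and vd: "psum_dist psi v c \<le> (real j - 1) * \<delta>" using v Dj by (auto simp: C_def)
            have uK: "u \<in> K" using TK vK v by blast
            have "psum_dist psi u c \<le> psum_dist psi u (T c) + psum_dist psi (T c) c"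
            proof -
              have "u \<in> psum_space r X" "T c \<in> psum_space r X" "c \<in> psum_space r X" using uK TcK cK KS by auto
              then show ?thesis using pd_tri[OF psi] by blast
            qed
            also have "psum_dist psi u (T c) \<le> psum_dist psi v c"
              using Tne vK cK v by (simp add: psum_nonexpansive_def)
            finally have "psum_dist psi u c \<le> (real j - 1) * \<delta> + \<delta>" using vd \<delta>_def by simp
            then show ?thesis using uK by (simp add: C_def algebra_simps)
          qed
        qed
        then show "D (Suc j) \<subseteq> C (Suc j)" unfolding eq using Cconv[of "Suc j"] conv_sub by blast
      qed
    qed
  qed
  show ?thesis
  proof
    fix u assume "u \<in> D k"
    then have uK: "u \<in> K" and ud: "psum_dist psi u c \<le> (real k - 1) * \<delta>"
      using main[of k] k by (auto simp: C_def)
    have rr: "r \<in> {1..r}" using r by simp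
    have "norm (u r - c r) \<le> psum_dist psi u c"
    proof -
      have "u \<in> psum_space r X" "c \<in> psum_space r X" using uK cK KS by auto
      from psi_coord[OF psi N_R[OF this] rr] show ?thesis by (simp add: psum_dist_def psum_norm_def)
    qed
    moreover have "norm (u r) \<le> norm (c r) + norm (u r - c r)"
      by (metis add.commute diff_add_cancel norm_triangle_ineq)
    moreover have "(real k - 1) * \<delta> \<le> (real k - 1) * \<epsilon>1"
      using dlt k by (intro mult_left_mono) auto
    moreover have "norm (c r) < \<epsilon>1" using n1 by (simp add: c_def)
    moreover have "real k * \<epsilon>1 = \<epsilon>1 + (real k - 1) * \<epsilon>1" by (simp add: algebra_simps)
    ultimately show "norm (u r) < real k * \<epsilon>1" using ud by linarith
  qed
qed

end
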